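(* Let $(R,pR)$ be a discrete valuation domain with valuation $\mathsf{v}$ and finite residue field. Let $f\in R[x]$ be a primitive, non-constant polynomial with irreducible divisor set $\mathcal{P}$ and write $f=\prod_{g\in\mathcal{P}}g^{m_g}$ with multiplicity vector $\mathbf{m}=(m_g)_{g\in\mathcal{P}}\in\mathbb{N}^{\mathcal{P}}$. Assume $n:=\mathsf{v}(\operatorname{d}(f))\in\mathbb{N}$ (so $n\ge 1$) and set $F=\frac{f}{p^n}\in\operatorname{Int}(R)$. If $\operatorname{fdk}(f)\neq\mathbf{0}$, then $F$ is not absolutely irreducible in $\operatorname{Int}(R)$. More precisely, if $F$ is irreducible in $\operatorname{Int}(R)$ and $\mathbf{0}\neq\mathbf{v}\in\operatorname{fdk}(f)\cap\mathbb{Z}^{\mathcal{P}}$, then $F^j$ factors non-uniquely in $\operatorname{Int}(R)$ for every $j\in\mathbb{N}$ with $$j\ \ge\ (n+1)\left(\left\lceil\Big\|\tfrac{\mathbf{v}^+}{\mathbf{m}}\Big\|_\infty\right\rceil+\left\lceil\Big\|\tfrac{\mathbf{v}^-}{\mathbf{m}}\Big\|_\infty\right\rceil\right).$$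
   Context: $(R,pR)$ is a discrete valuation domain with valuation $\mathsf{v}$, finite residue field, and quotient field $K$. $\operatorname{Int}(R)=\{F\in K[x]\mid F(R)\subseteq R\}$; its units are the units of $R$. For $f\in R[x]$, the fixed divisor $\operatorname{d}(f)$ is $\gcd(f(a)\mid a\in R)$, so $\mathsf{v}(\operatorname{d}(f))=\min_{a\in R}\mathsf{v}(f(a))$. A polynomial in $R[x]$ is primitive if its coefficients generate $R$ as an ideal. An irreducible divisor set $\mathcal{P}$ of $f$ is a set of representatives of the associate classes (in $R[x]$) of the irreducible divisors of $f$ in $R[x]$. For $a\in R$ let $\mathsf{v}_{\mathcal{P}}(a)=(\mathsf{v}(g(a)))_{g\in\mathcal{P}}$. The set of fixed divisor witnesses is $\mathcal{W}(f)=\{a\in R\mid \mathsf{v}(f(a))=\mathsf{v}(\operatorname{d}(f))\}$. The fixed divisor kernel is the $\mathbb{Q}$-subspace $$\operatorname{fdk}(f)=\Big\{\mathbf{u}=(u_g)_{g\in\mathcal{P}}\in\mathbb{Q}^{\mathcal{P}}\ \Big|\ \forall a\in\mathcal{W}(f):\ \textstyle\sum_{g\in\mathcal{P}}u_g\,\mathsf{v}(g(a))=0\Big\}.$$ For $\mathbf{u}\in\mathbb{Q}^{\mathcal{P}}$: $\mathbf{u}^+=\max(\mathbf{u},\mathbf{0})$ and $\mathbf{u}^-=-\min(\mathbf{u},\mathbf{0})$ componentwise; $\|\mathbf{u}\|_\infty=\max_g|u_g|$; for $\mathbf{w}$ with all entries nonzero, $\frac{\mathbf{u}}{\mathbf{w}}=(u_g/w_g)_{g\in\mathcal{P}}$.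 In a commutative ring, two factorizations into irreducibles $a_1\cdots a_k=b_1\cdots b_l$ are essentially the same if $k=l$ and after reindexing $a_i$ and $b_i$ are associated; an element "factors non-uniquely" if it has two essentially different factorizations into irreducibles. An irreducible $r$ is absolutely irreducible if for every $k\in\mathbb{N}$ every factorization of $r^k$ is essentially the same as $r\cdots r$. *)

theory Defs
  imports "HOL-Computational_Algebra.Computational_Algebra" "HOL-Library.Extended_Nat"
begin

definition dvr_uniformizer :: "'a::idom \<Rightarrow> bool" where
  "dvr_uniformizer p \<longleftrightarrow> p \<noteq> 0 \<and> \<not> p dvd 1 \<and>
     (\<forall>x. x \<noteq> 0 \<longrightarrow> (\<exists>u k. u dvd 1 \<and> x = u * p ^ k))"

definition finite_residue_field :: "'a::idom \<Rightarrow> bool" where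
  "finite_residue_field p \<longleftrightarrow> finite (UNIV // {(x, y). p dvd x - y})"

text \<open>Exponent of p in x (for x nonzero): largest k with p^k dividing x.\<close>
definition pexp :: "'a::idom \<Rightarrow> 'a \<Rightarrow> nat" where
  "pexp p x = Max {k. p ^ k dvd x}"

definition val :: "'a::idom \<Rightarrow> 'a \<Rightarrow> enat" where
  "val p x = (if x = 0 then \<infinity> else enat (pexp p x))"

text \<open>v(d(f)) = min over a in R of v(f(a)).\<close>
definition fixdiv_val :: "'a::idom \<Rightarrow> 'a poly \<Rightarrow> enat" where
  "fixdiv_val p f = (INF a. val p (poly f a))"

definition witnesses :: "'a::idom \<Rightarrow> 'a poly \<Rightarrow> 'a set" where
  "witnesses p f = {a. val p (poly f a) = fixdiv_val p f}"

text \<open>Vectors in Q^P are functions vanishing outside P.\<close>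
definition fdk :: "'a::idom \<Rightarrow> 'a poly \<Rightarrow> 'a poly set \<Rightarrow> ('a poly \<Rightarrow> rat) set" where
  "fdk p f P = {u. (\<forall>g. g \<notin> P \<longrightarrow> u g = 0) \<and>
      (\<forall>a \<in> witnesses p f. (\<Sum>g\<in>P. u g * of_nat (pexp p (poly g a))) = 0)}"

text \<open>Primitive: the coefficients generate R as an ideal.\<close>
definition primitive :: "'a::idom poly \<Rightarrow> bool" where
  "primitive f \<longleftrightarrow> (\<exists>c. (\<Sum>i\<le>degree f. c i * coeff f i) = 1)"

definition irred_divisor_set :: "'a::idom poly \<Rightarrow> 'a poly set \<Rightarrow> bool" where
  "irred_divisor_set f P \<longleftrightarrow>
     (\<forall>g\<in>P. irreducible g \<and> g dvd f) \<and>
     (\<forall>g\<in>P. \<forall>h\<in>P. g dvd h \<and> h dvd g \<longrightarrow> g = h) \<and>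
     (\<forall>h. irreducible h \<and> h dvd f \<longrightarrow> (\<exists>g\<in>P. g dvd h \<and> h dvd g))"

definition intR :: "'a::idom fract poly set" where
  "intR = {F. \<forall>a. poly F (to_fract a) \<in> range to_fract}"

definition unit_in :: "'b::comm_ring_1 set \<Rightarrow> 'b \<Rightarrow> bool" where
  "unit_in S x \<longleftrightarrow> x \<in> S \<and> (\<exists>y\<in>S. x * y = 1)"

definition assoc_in :: "'b::comm_ring_1 set \<Rightarrow> 'b \<Rightarrow> 'b \<Rightarrow> bool" where
  "assoc_in S x y \<longleftrightarrow> (\<exists>u. unit_in S u \<and> x = u * y)"

definition irred_in :: "'b::comm_ring_1 set \<Rightarrow> 'b \<Rightarrow> bool" where
  "irred_in S x \<longleftrightarrow> x \<in> S \<and> x \<noteq> 0 \<and> \<not> unit_in S x \<and>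
     (\<forall>a\<in>S. \<forall>b\<in>S. x = a * b \<longrightarrow> unit_in S a \<or> unit_in S b)"

definition factorization_in :: "'b::comm_ring_1 set \<Rightarrow> 'b \<Rightarrow> 'b list \<Rightarrow> bool" where
  "factorization_in S x xs \<longleftrightarrow> (\<forall>y\<in>set xs. irred_in S y) \<and> prod_list xs = x"

definition ess_same_in :: "'b::comm_ring_1 set \<Rightarrow> 'b list \<Rightarrow> 'b list \<Rightarrow> bool" where
  "ess_same_in S xs ys \<longleftrightarrow> length xs = length ys \<and>
     (\<exists>\<sigma>. bij_betw \<sigma> {..<length xs} {..<length xs} \<and>
        (\<forall>i<length xs. assoc_in S (xs ! i) (ys ! \<sigma> i)))"

definition factors_nonuniquely_in :: "'b::comm_ring_1 set \<Rightarrow> 'b \<Rightarrow> bool" where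
  "factors_nonuniquely_in S x \<longleftrightarrow>
     (\<exists>xs ys. factorization_in S x xs \<and> factorization_in S x ys \<and> \<not> ess_same_in S xs ys)"

definition abs_irred_in :: "'b::comm_ring_1 set \<Rightarrow> 'b \<Rightarrow> bool" where
  "abs_irred_in S r \<longleftrightarrow> irred_in S r \<and>
     (\<forall>k::nat. \<forall>xs. factorization_in S (r ^ k) xs \<longrightarrow> ess_same_in S xs (replicate k r))"

text \<open>The sup-norm of u^+/m and u^-/m over P (entries nonnegative, so 0 is a harmless default).\<close>
definition norm_pos_ratio :: "'c set \<Rightarrow> ('c \<Rightarrow> int) \<Rightarrow> ('c \<Rightarrow> nat) \<Rightarrow> rat" where
  "norm_pos_ratio P v m = Max (insert 0 ((\<lambda>g. of_int (max (v g) 0) / of_nat (m g)) ` P))"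

definition norm_neg_ratio :: "'c set \<Rightarrow> ('c \<Rightarrow> int) \<Rightarrow> ('c \<Rightarrow> nat) \<Rightarrow> rat" where
  "norm_neg_ratio P v m = Max (insert 0 ((\<lambda>g. of_int (- min (v g) 0) / of_nat (m g)) ` P))"

end

theory Submission
  imports Defs
begin


lemma dvr_basic:
  assumes "dvr_uniformizer p"
  shows "p \<noteq> 0" "\<not> p dvd 1" "x \<noteq> 0 \<Longrightarrow> \<exists>u k. u dvd 1 \<and> x = u * p ^ k"
  using assms unfolding dvr_uniformizer_def by auto

lemma dvr_pow_dvd_unit:
  fixes p :: "'a::idom"
  assumes "dvr_uniformizer p" "u dvd 1"
  shows "p ^ i dvd u * p ^ k \<longleftrightarrow> i \<le> k"
proof
  assume h: "p ^ i dvd u * p ^ k"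
  show "i \<le> k"
  proof (rule ccontr)
    assume "\<not> i \<le> k"
    then have "p ^ (k + 1) dvd p ^ i" by (intro le_imp_power_dvd) simp
    with h have "p ^ k * p dvd p ^ k * u" by (metis dvd_trans mult.commute power_add power_one_right)
    then have "p dvd u" using dvr_basic(1)[OF assms(1)] by (simp add: dvd_mult_cancel_left)
    with assms show False using dvr_basic(2) dvd_trans by blast
  qed
next
  assume "i \<le> k" then show "p ^ i dvd u * p ^ k" by (simp add: le_imp_power_dvd)
qed

lemma pexp_eq:
  fixes p :: "'a::idom"
  assumes "dvr_uniformizer p" "u dvd 1" "x = u * p ^ k"
  shows "pexp p x = k"
proof -
  have "{i. p ^ i dvd x} = {..k}" using dvr_pow_dvd_unit[OF assms(1,2)] assms(3) by auto
  then show ?thesis unfolding pexp_def by (auto intro: Max_eqI)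
qed

lemma pexp_dvd_iff:
  fixes p :: "'a::idom"
  assumes "dvr_uniformizer p" "x \<noteq> 0"
  shows "p ^ i dvd x \<longleftrightarrow> i \<le> pexp p x"
proof -
  obtain u k where uk: "u dvd 1" "x = u * p ^ k" using dvr_basic(3)[OF assms] by blast
  show ?thesis using pexp_eq[OF assms(1) uk] dvr_pow_dvd_unit[OF assms(1) uk(1)] uk(2) by simp
qed

lemma pexp_dvd:
  fixes p :: "'a::idom"
  assumes "dvr_uniformizer p" "x \<noteq> 0"
  shows "p ^ pexp p x dvd x"
  using pexp_dvd_iff[OF assms] by simp

lemma pexp_mult:
  fixes p :: "'a::idom"
  assumes "dvr_uniformizer p" "x \<noteq> 0" "y \<noteq> 0"
  shows "pexp p (x * y) = pexp p x + pexp p y"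
proof -
  obtain u k where uk: "u dvd 1" "x = u * p ^ k" using dvr_basic(3)[OF assms(1,2)] by blast
  obtain w l where wl: "w dvd 1" "y = w * p ^ l" using dvr_basic(3)[OF assms(1,3)] by blast
  have "x * y = (u * w) * p ^ (k + l)" using uk wl by (simp add: power_add algebra_simps)
  moreover have "u * w dvd 1" using mult_dvd_mono[OF uk(1) wl(1)] by simp
  ultimately have "pexp p (x * y) = k + l" using pexp_eq[OF assms(1)] by blast
  then show ?thesis using pexp_eq[OF assms(1) uk] pexp_eq[OF assms(1) wl] by simp
qed

lemma pexp_unit:
  fixes p :: "'a::idom"
  assumes "dvr_uniformizer p" "u dvd 1"
  shows "pexp p u = 0"
  using pexp_eq[OF assms, of u 0] by simp

lemma pexp_zero_unit:
  fixes p :: "'a::idom"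
  assumes "dvr_uniformizer p" "x \<noteq> 0" "pexp p x = 0"
  shows "x dvd 1"
proof -
  obtain u k where uk: "u dvd 1" "x = u * p ^ k" using dvr_basic(3)[OF assms(1,2)] by blast
  then have "k = 0" using pexp_eq[OF assms(1) uk] assms(3) by simp
  then show ?thesis using uk by simp
qed

lemma pexp_ppow:
  fixes p :: "'a::idom"
  assumes "dvr_uniformizer p"
  shows "pexp p (p ^ k) = k"
  using pexp_eq[OF assms, of 1 "p^k" k] by simp

lemma pexp_power:
  fixes p :: "'a::idom"
  assumes "dvr_uniformizer p" "x \<noteq> 0"
  shows "pexp p (x ^ k) = k * pexp p x"
  by (induction k) (auto simp: pexp_mult[OF assms(1)] assms pexp_unit[OF assms(1)])

lemma pexp_prod:
  fixes p :: "'a::idom"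
  assumes "dvr_uniformizer p" "\<forall>g\<in>A. h g \<noteq> 0"
  shows "pexp p (\<Prod>g\<in>A. h g) = (\<Sum>g\<in>A. pexp p (h g))"
  using assms(2)
proof (induction A rule: infinite_finite_induct)
  case (infinite A) then show ?case by (simp add: pexp_unit[OF assms(1)])
next
  case empty then show ?case by (simp add: pexp_unit[OF assms(1)])
next
  case (insert x F) then show ?case by (simp add: pexp_mult[OF assms(1)])
qed

lemma dvr_prime:
  fixes p :: "'a::idom"
  assumes "dvr_uniformizer p"
  shows "prime_elem p"
proof (rule prime_elemI)
  show "p \<noteq> 0" "\<not> p dvd 1" using dvr_basic[OF assms] by auto
  fix a b assume h: "p dvd a * b"
  show "p dvd a \<or> p dvd b"
  proof (cases "a = 0 \<or> b = 0")
    case True then show ?thesis by auto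
  next
    case False
    then have "a * b \<noteq> 0" by auto
    then have "1 \<le> pexp p (a * b)" using pexp_dvd_iff[OF assms, of "a*b" 1] h by simp
    then have "1 \<le> pexp p a \<or> 1 \<le> pexp p b" using pexp_mult[OF assms] False by auto
    then show ?thesis using pexp_dvd_iff[OF assms] False by (metis power_one_right)
  qed
qed



lemma poly_fract: "poly (map_poly to_fract h) (to_fract a) = to_fract (poly h a)"
  by (induction h) (simp_all add: map_poly_pCons)

lemma intR_mult: "X \<in> intR \<Longrightarrow> Y \<in> intR \<Longrightarrow> X * Y \<in> intR"
  unfolding intR_def by (auto simp: image_iff) (metis to_fract_mult)

lemma intR_one: "1 \<in> intR"
  unfolding intR_def by (auto simp: image_iff intro: exI[of _ 1])

lemma intR_const: "[:to_fract r:] \<in> intR"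
  unfolding intR_def by auto

lemma intR_power: "X \<in> intR \<Longrightarrow> X ^ k \<in> intR"
  by (induction k) (auto simp: intR_one intR_mult)

lemma intR_scaled:
  fixes p :: "'a::idom"
  assumes "p \<noteq> 0" "\<forall>a. p ^ al dvd poly h a"
  shows "smult (inverse (to_fract (p ^ al))) (map_poly to_fract h) \<in> intR"
  unfolding intR_def
proof safe
  fix a
  obtain c where c: "poly h a = p ^ al * c" using assms(2) by blast
  have "poly (smult (inverse (to_fract (p ^ al))) (map_poly to_fract h)) (to_fract a)
     = inverse (to_fract (p ^ al)) * (to_fract (p ^ al) * to_fract c)"
    by (simp add: poly_fract c del: to_fract_mult) (simp)
  also have "\<dots> = to_fract c" using assms(1) by (simp del: to_fract_mult)
  finally show "poly (smult (inverse (to_fract (p ^ al))) (map_poly to_fract h)) (to_fract a) \<in> range to_fract" by simp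
qed

lemma unit_in_intR:
  assumes "unit_in intR U"
  shows "\<exists>u. (u::'a::idom) dvd 1 \<and> U = [:to_fract u:]"
proof -
  obtain W where W: "W \<in> intR" "U * W = 1" "U \<in> intR" using assms unfolding unit_in_def by blast
  have "U dvd 1" using W(2) by (metis dvd_triv_left)
  then obtain c where c: "U = [:c:]" by (elim is_unit_polyE) auto
  have "W dvd 1" using W(2) by (metis dvd_triv_right)
  then obtain d where d: "W = [:d:]" by (elim is_unit_polyE) auto
  have "poly U (to_fract 0) \<in> range to_fract" using W(3) unfolding intR_def by blast
  then obtain u where u: "c = to_fract u" using c by auto
  have "poly W (to_fract 0) \<in> range to_fract" using W(1) unfolding intR_def by blast
  then obtain w where w: "d = to_fract w" using d by auto
  have "c * d = 1" using W(2) c d by (simp add: one_pCons mult.commute)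
  then have "u * w = 1" using u w by (metis to_fract_1 to_fract_eq_iff to_fract_mult)
  then show ?thesis using c u by (metis dvd_triv_left)
qed

lemma unit_in_intR_const:
  assumes "(u::'a::idom) dvd 1"
  shows "unit_in intR [:to_fract u:]"
proof -
  obtain w where "1 = u * w" using assms by blast
  moreover have "[:to_fract u:] * [:to_fract w:] = [:to_fract (u * w):]" by simp
  ultimately have "[:to_fract u:] * [:to_fract w:] = 1" by (simp add: one_pCons)
  then show ?thesis unfolding unit_in_def using intR_const by blast
qed

lemma unit_in_mult:
  assumes "unit_in intR U" "unit_in intR V"
  shows "unit_in intR (U * V)"
proof -
  obtain U' where "U' \<in> intR" "U * U' = 1" "U \<in> intR" using assms(1) unfolding unit_in_def by blast
  moreover obtain V' where "V' \<in> intR" "V * V' = 1" "V \<in> intR" using assms(2) unfolding unit_in_def by blast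
  ultimately have "U * V * (U' * V') = 1" "U * V \<in> intR" "U' * V' \<in> intR"
    by (auto simp: intR_mult algebra_simps)
  then show ?thesis unfolding unit_in_def by blast
qed

definition evR :: "'a::idom fract poly \<Rightarrow> 'a \<Rightarrow> 'a" where
  "evR Y a = (SOME r. poly Y (to_fract a) = to_fract r)"

lemma evR: "Y \<in> intR \<Longrightarrow> poly Y (to_fract a) = to_fract (evR Y a)"
  unfolding evR_def intR_def by (rule someI_ex) auto

lemma atomic_aux:
  fixes p :: "'a::idom"
  assumes dvr: "dvr_uniformizer p"
  shows "N = degree Y + pexp p (evR Y a0) \<Longrightarrow> Y \<in> intR \<Longrightarrow> poly Y (to_fract a0) \<noteq> 0 \<Longrightarrow>
     \<not> unit_in intR Y \<Longrightarrow> \<exists>xs. factorization_in intR Y xs"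
proof (induction N arbitrary: Y rule: less_induct)
  case (less N Y)
  show ?case
  proof (cases "irred_in intR Y")
    case True
    then show ?thesis unfolding factorization_in_def by (intro exI[of _ "[Y]"]) auto
  next
    case False
    have "Y \<noteq> 0" using less.prems(3) by auto
    then obtain a b where ab: "a \<in> intR" "b \<in> intR" "Y = a * b" "\<not> unit_in intR a" "\<not> unit_in intR b"
      using False less.prems(2,4) unfolding irred_in_def by blast
    have pa: "poly a (to_fract a0) \<noteq> 0" and pb: "poly b (to_fract a0) \<noteq> 0"
      using less.prems(3) ab(3) by auto
    have ea: "evR a a0 \<noteq> 0" and eb: "evR b a0 \<noteq> 0" using pa pb evR ab(1,2) by fastforce+
    have "to_fract (evR Y a0) = to_fract (evR a a0 * evR b a0)"
      using evR[OF less.prems(2)] evR[OF ab(1)] evR[OF ab(2)] ab(3) by (metis poly_mult to_fract_mult)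
    then have eY: "evR Y a0 = evR a a0 * evR b a0" by (metis to_fract_eq_iff)
    have anz: "a \<noteq> 0" "b \<noteq> 0" using pa pb by auto
    have mu: "N = (degree a + pexp p (evR a a0)) + (degree b + pexp p (evR b a0))"
      using less.prems(1) ab(3) eY degree_mult_eq[OF anz] pexp_mult[OF dvr ea eb] by simp
    have pos: "degree c + pexp p (evR c a0) \<ge> 1" if "c \<in> intR" "\<not> unit_in intR c" "evR c a0 \<noteq> 0" for c
    proof (rule ccontr)
      assume "\<not> ?thesis"
      then have d0: "degree c = 0" and e0: "pexp p (evR c a0) = 0" by auto
      have "evR c a0 dvd 1" using pexp_zero_unit[OF dvr that(3) e0] .
      moreover have "c = [:to_fract (evR c a0):]"
        using d0 evR[OF that(1), of a0] by (metis degree_0_id poly_0_coeff_0 coeff_pCons_0 poly_pCons poly_0 mult_zero_right add.right_neutral degree_eq_zeroE)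
      ultimately show False using unit_in_intR_const that(2) by metis
    qed
    have "degree b + pexp p (evR b a0) \<ge> 1" using pos[OF ab(2) ab(5) eb] .
    then obtain xa where xa: "factorization_in intR a xa"
      using less.IH[OF _ refl ab(1) pa ab(4)] mu by force
    have "degree a + pexp p (evR a a0) \<ge> 1" using pos[OF ab(1) ab(4) ea] .
    then obtain xb where xb: "factorization_in intR b xb"
      using less.IH[OF _ refl ab(2) pb ab(5)] mu by force
    show ?thesis using xa xb ab(3) unfolding factorization_in_def
      by (intro exI[of _ "xa @ xb"]) auto
  qed
qed

lemma atomic:
  fixes p :: "'a::idom" and Y :: "'a fract poly"
  assumes "dvr_uniformizer p" "Y \<in> intR" "poly Y (to_fract a0) \<noteq> 0" "\<not> unit_in intR Y"
  shows "\<exists>xs. factorization_in intR Y xs"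
  by (rule atomic_aux[OF assms(1)]) (use assms in auto)

lemma ess_same_assoc:
  assumes "ess_same_in S xs (replicate j F)"
  shows "\<forall>y\<in>set xs. assoc_in S y F"
proof
  fix y assume "y \<in> set xs"
  then obtain i where i: "i < length xs" "y = xs ! i" by (metis in_set_conv_nth)
  obtain \<sigma> where s: "bij_betw \<sigma> {..<length xs} {..<length xs}"
     "\<forall>i<length xs. assoc_in S (xs ! i) (replicate j F ! \<sigma> i)" and l: "length xs = j"
    using assms unfolding ess_same_in_def by auto
  have "\<sigma> i < j" using s(1) i(1) l by (auto dest: bij_betwE)
  then show "assoc_in S y F" using s(2) i by auto
qed

lemma assoc_prod:
  assumes "\<forall>y\<in>set ys. assoc_in intR y F"
  shows "\<exists>U. unit_in intR U \<and> prod_list ys = U * F ^ length ys"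
  using assms
proof (induction ys)
  case Nil
  then show ?case using unit_in_intR_const[of 1] by (intro exI[of _ 1]) (auto simp: one_pCons)
next
  case (Cons y ys)
  then obtain U where U: "unit_in intR U" "prod_list ys = U * F ^ length ys" by auto
  obtain u where u: "unit_in intR u" "y = u * F" using Cons.prems unfolding assoc_in_def by auto
  show ?case using unit_in_mult[OF u(1) U(1)] U(2) u(2) by (intro exI[of _ "u * U"]) (simp add: algebra_simps)
qed



definition pprim :: "'a::idom \<Rightarrow> 'a poly \<Rightarrow> bool" where
  "pprim p q \<longleftrightarrow> q \<noteq> 0 \<and> \<not> [:p:] dvd q"

lemma gauss:
  fixes p :: "'a::idom"
  assumes "dvr_uniformizer p" "pprim p a" "pprim p b"
  shows "pprim p (a * b)"
  using assms lift_prime_elem_poly[OF dvr_prime[OF assms(1)]] unfolding pprim_def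
  by (auto simp: prime_elem_dvd_mult_iff)

lemma clear_denoms:
  fixes Q :: "'a::idom fract poly"
  shows "\<exists>d q. d \<noteq> 0 \<and> smult (to_fract d) Q = map_poly to_fract q"
proof (induction Q)
  case 0
  then show ?case by (intro exI[of _ 1] exI[of _ 0]) simp
next
  case (pCons c Q)
  obtain d' q' where dq: "d' \<noteq> 0" "smult (to_fract d') Q = map_poly to_fract q'" using pCons.IH by blast
  obtain a b where ab: "c = Fract a b" "b \<noteq> 0" by (cases c)
  have c: "c = to_fract a / to_fract b" using ab by (simp add: Fract_conv_to_fract)
  have "smult (to_fract (b * d')) (pCons c Q) = pCons (to_fract (a * d')) (smult (to_fract b) (smult (to_fract d') Q))"
    using ab(2) by (simp add: c field_simps)
  also have "\<dots> = map_poly to_fract (pCons (a * d') (smult b q'))"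
    by (simp add: dq(2) map_poly_pCons)
  finally show ?case using dq(1) ab(2) by (intro exI[of _ "b * d'"] exI[of _ "pCons (a * d') (smult b q')"]) simp
qed

lemma extract_content:
  fixes p :: "'a::idom"
  assumes dvr: "dvr_uniformizer p"
  shows "N = pexp p (lead_coeff q) \<Longrightarrow> q \<noteq> 0 \<Longrightarrow> \<exists>k q0. pprim p q0 \<and> q = smult (p ^ k) q0"
proof (induction N arbitrary: q rule: less_induct)
  case (less N q)
  show ?case
  proof (cases "[:p:] dvd q")
    case False
    then show ?thesis using less.prems unfolding pprim_def by (intro exI[of _ 0] exI[of _ q]) simp
  next
    case True
    then obtain q1 where q1: "q = [:p:] * q1" by blast
    have "q1 \<noteq> 0" using less.prems(2) q1 by auto
    have lc: "lead_coeff q = p * lead_coeff q1" using q1 by (simp add: lead_coeff_mult)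
    have "p \<noteq> 0" using dvr_basic[OF dvr] by auto
    then have "pexp p (lead_coeff q) = pexp p p + pexp p (lead_coeff q1)"
      using lc pexp_mult[OF dvr] \<open>q1 \<noteq> 0\<close> by simp
    moreover have "pexp p p = 1" using pexp_ppow[OF dvr, of 1] by simp
    ultimately obtain k q0 where "pprim p q0" "q1 = smult (p ^ k) q0"
      using less.IH[OF _ refl \<open>q1 \<noteq> 0\<close>] less.prems(1) by force
    then show ?thesis using q1 by (intro exI[of _ "Suc k"] exI[of _ q0]) (simp add: mult.commute)
  qed
qed

lemma represent:
  fixes p :: "'a::idom" and Q :: "'a fract poly"
  assumes dvr: "dvr_uniformizer p" and "Q \<noteq> 0"
  shows "\<exists>c q. c \<noteq> 0 \<and> pprim p q \<and> Q = smult c (map_poly to_fract q)"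
proof -
  obtain d q where dq: "d \<noteq> 0" "smult (to_fract d) Q = map_poly to_fract q" using clear_denoms by blast
  have "q \<noteq> 0" using dq assms(2) by (metis fract_poly_eq_0_iff smult_eq_0_iff to_fract_eq_0_iff)
  then obtain k q0 where kq: "pprim p q0" "q = smult (p ^ k) q0" using extract_content[OF dvr refl] by blast
  have "p \<noteq> 0" using dvr_basic[OF dvr] by auto
  have "Q = smult (to_fract (p ^ k) / to_fract d) (map_poly to_fract q0)"
    using dq kq(2) by (metis (no_types, lifting) divide_inverse_commute fract_poly_smult mult.commute smult_smult
        to_fract_eq_0_iff inverse_eq_divide smult_1_left field_class.field_inverse)
  moreover have "to_fract (p ^ k) / to_fract d \<noteq> 0" using \<open>p \<noteq> 0\<close> dq(1) by simp
  ultimately show ?thesis using kq(1) by blast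
qed

lemma pprim_scal_dvd:
  fixes p :: "'a::idom"
  assumes dvr: "dvr_uniformizer p" and "smult a q = smult b r" "b \<noteq> 0" "pprim p q"
  shows "b dvd a"
proof (cases "a = 0")
  case True then show ?thesis by simp
next
  case False
  obtain i where i: "\<not> p dvd coeff q i" using assms(4) unfolding pprim_def by (auto simp: const_poly_dvd_iff)
  have qi: "coeff q i \<noteq> 0" using i by auto
  have e: "a * coeff q i = b * coeff r i" using assms(2) by (metis coeff_smult)
  then have ri: "coeff r i \<noteq> 0" using False qi by auto
  have "pexp p (coeff q i) = 0" using pexp_dvd_iff[OF dvr qi, of 1] i by simp
  then have "pexp p a = pexp p b + pexp p (coeff r i)"
    using e pexp_mult[OF dvr False qi] pexp_mult[OF dvr assms(3) ri] by simp
  then have le: "pexp p b \<le> pexp p a" by simp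
  obtain u k where uk: "u dvd 1" "a = u * p ^ k" using dvr_basic(3)[OF dvr False] by blast
  obtain w l where wl: "w dvd 1" "b = w * p ^ l" using dvr_basic(3)[OF dvr assms(3)] by blast
  have "l \<le> k" using le pexp_eq[OF dvr uk] pexp_eq[OF dvr wl] by simp
  obtain w' where w': "1 = w * w'" using wl(1) by blast
  have "a = b * (w' * u * p ^ (k - l))"
    using uk(2) wl(2) w' \<open>l \<le> k\<close> by (simp add: algebra_simps power_add[symmetric])
  then show ?thesis by (rule dvdI)
qed

lemma scal_in_R:
  fixes p :: "'a::idom"
  assumes dvr: "dvr_uniformizer p" and "smult c (map_poly to_fract q) = map_poly to_fract r" "pprim p q"
  shows "\<exists>c0. c = to_fract c0"
proof -
  obtain x y where xy: "c = Fract x y" "y \<noteq> 0" by (cases c)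
  have c: "c = to_fract x / to_fract y" using xy by (simp add: Fract_conv_to_fract)
  have "smult (to_fract y) (smult c (map_poly to_fract q)) = smult (to_fract y) (map_poly to_fract r)"
    using assms(2) by simp
  then have "map_poly to_fract (smult x q) = map_poly to_fract (smult y r)"
    using xy(2) by (simp add: c)
  then have "smult x q = smult y r" using fract_poly_eq_iff by blast
  then have "y dvd x" using pprim_scal_dvd[OF dvr _ xy(2) assms(3)] by blast
  then obtain z where "x = y * z" by blast
  then show ?thesis using xy(2) by (intro exI[of _ z]) (simp add: c)
qed

lemma degree_fract: "degree (map_poly to_fract q) = degree q"
  by (rule degree_map_poly) simp

lemma irred_prime:
  fixes p :: "'a::idom" and g :: "'a poly"
  assumes dvr: "dvr_uniformizer p" and irr: "irreducible g" and deg: "degree g \<ge> 1"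
  shows "prime_elem g"
proof -
  have gnz: "g \<noteq> 0" using irr by auto
  have pg: "pprim p g"
    unfolding pprim_def
  proof safe
    assume "[:p:] dvd g"
    then obtain h where h: "g = [:p:] * h" by blast
    then have "[:p:] dvd 1 \<or> h dvd 1" using irreducibleD[OF irr] by blast
    moreover have "\<not> [:p:] dvd 1" using dvr_basic(2)[OF dvr] by (simp add: is_unit_const_poly_iff)
    moreover have "\<not> h dvd 1"
    proof
      assume "h dvd 1"
      then obtain c where "h = [:c:]" by (elim is_unit_polyE)
      then show False using h deg by simp
    qed
    ultimately show False by blast
  qed (use gnz in auto)
  have irrF: "irreducible (map_poly to_fract g)"
  proof (rule irreducibleI)
    show "map_poly to_fract g \<noteq> 0" using gnz by simp
    show "\<not> map_poly to_fract g dvd 1" using deg gnz by (simp add: is_unit_iff_degree degree_fract)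
    fix A B assume AB: "map_poly to_fract g = A * B"
    show "A dvd 1 \<or> B dvd 1"
    proof (rule ccontr)
      assume nu: "\<not> (A dvd 1 \<or> B dvd 1)"
      have nz: "A \<noteq> 0" "B \<noteq> 0" using AB gnz by auto
      have "degree A \<noteq> 0" "degree B \<noteq> 0" using nu nz is_unit_iff_degree by blast+
      then have dA: "degree A \<ge> 1" and dB: "degree B \<ge> 1" by auto
      obtain cA a where a: "cA \<noteq> 0" "pprim p a" "A = smult cA (map_poly to_fract a)" using represent[OF dvr nz(1)] by blast
      obtain cB b where b: "cB \<noteq> 0" "pprim p b" "B = smult cB (map_poly to_fract b)" using represent[OF dvr nz(2)] by blast
      have e: "smult (cA * cB) (map_poly to_fract (a * b)) = map_poly to_fract g"
        using AB a(3) b(3) by (simp add: mult_ac)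
      obtain c0 where c0: "cA * cB = to_fract c0" using scal_in_R[OF dvr e gauss[OF dvr a(2) b(2)]] by blast
      have "map_poly to_fract g = map_poly to_fract (smult c0 a * b)" using e c0 by simp
      then have "g = smult c0 a * b" using fract_poly_eq_iff by blast
      then have "smult c0 a dvd 1 \<or> b dvd 1" using irreducibleD[OF irr] by blast
      moreover have "degree a \<ge> 1" using dA a(1,3) by (simp add: degree_fract)
      moreover have "degree b \<ge> 1" using dB b(1,3) by (simp add: degree_fract)
      moreover have "c0 \<noteq> 0" using c0 a(1) b(1) by auto
      ultimately show False by (auto elim!: is_unit_polyE dest: arg_cong[of _ _ degree])
    qed
  qed
  have primF: "prime_elem (map_poly to_fract g)" using field_poly_irreducible_imp_prime[OF irrF] .
  have down: "g dvd x" if hx: "map_poly to_fract g dvd map_poly to_fract x" for x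
  proof (cases "x = 0")
    case True then show ?thesis by simp
  next
    case False
    obtain Q where Q: "map_poly to_fract x = map_poly to_fract g * Q" using hx by blast
    then have "Q \<noteq> 0" using False by auto
    then obtain c q where cq: "c \<noteq> 0" "pprim p q" "Q = smult c (map_poly to_fract q)" using represent[OF dvr] by blast
    have e: "smult c (map_poly to_fract (g * q)) = map_poly to_fract x" using Q cq(3) by (simp add: mult_ac)
    obtain c0 where c0: "c = to_fract c0" using scal_in_R[OF dvr e gauss[OF dvr pg cq(2)]] by blast
    have "map_poly to_fract x = map_poly to_fract (g * smult c0 q)" using e c0 by simp
    then have "x = g * smult c0 q" using fract_poly_eq_iff by blast
    then show ?thesis by (rule dvdI)
  qed
  show ?thesis
  proof (rule prime_elemI)
    show "g \<noteq> 0" using gnz .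
    show "\<not> g dvd 1" using irr by (simp add: irreducible_def)
    fix x y assume "g dvd x * y"
    then have "map_poly to_fract g dvd map_poly to_fract x * map_poly to_fract y"
      by (metis fract_poly_dvd fract_poly_mult)
    then show "g dvd x \<or> g dvd y" using prime_elem_dvd_multD[OF primF] down by blast
  qed
qed



lemma fract_power: "map_poly to_fract (q ^ k) = (map_poly to_fract q) ^ k"
  by (induction k) simp_all

lemma finite_P:
  assumes "degree f > 0" "f = (\<Prod>g\<in>P. g ^ m g)"
  shows "finite P"
  using assms by (cases "finite P") auto

lemma P_deg:
  assumes "primitive f" "irred_divisor_set f P" "g \<in> P"
  shows "degree g \<ge> 1"
proof (rule ccontr)
  assume "\<not> degree g \<ge> 1"
  then obtain c where c: "g = [:c:]" by (metis degree_eq_zeroE less_one not_le)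
  have gd: "g dvd f" "irreducible g" using assms(2,3) unfolding irred_divisor_set_def by auto
  then have "\<forall>i. c dvd coeff f i" using c const_poly_dvd_iff by blast
  moreover obtain cc where "(\<Sum>i\<le>degree f. cc i * coeff f i) = 1" using assms(1) unfolding primitive_def by blast
  ultimately have "c dvd (\<Sum>i\<le>degree f. cc i * coeff f i)" by (intro dvd_sum) simp
  then have "c dvd 1" using \<open>(\<Sum>i\<le>degree f. cc i * coeff f i) = 1\<close> by simp
  then have "g dvd 1" using c by (simp add: is_unit_const_poly_iff)
  then show False using gd(2) by (simp add: irreducible_def)
qed

lemma P_nodvd:
  assumes "irred_divisor_set f P" "g \<in> P" "h \<in> P" "g \<noteq> h"
  shows "\<not> g dvd h"
proof
  assume "g dvd h"
  then obtain q where q: "h = g * q" by blast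
  have irr: "irreducible h" "irreducible g" using assms unfolding irred_divisor_set_def by auto
  then have "q dvd 1" using irreducibleD[OF irr(1) q] by (auto simp: irreducible_def)
  then obtain q' where q': "1 = q * q'" by blast
  have "g = h * q'" using q q' by (simp add: mult.assoc)
  then have "h dvd g" by (rule dvdI)
  then show False using assms \<open>g dvd h\<close> unfolding irred_divisor_set_def by blast
qed

lemma prime_nodvd_prod:
  assumes "prime_elem g" "finite S" "\<forall>h\<in>S. \<not> g dvd h"
  shows "\<not> g dvd (\<Prod>h\<in>S. h ^ e h)"
  using assms(2,3)
proof (induction S rule: finite_induct)
  case empty then show ?case using assms(1) by (simp add: prime_elem_not_unit)
next
  case (insert x F)
  then show ?case using assms(1) by (auto simp: prime_elem_dvd_mult_iff dest: prime_elem_dvd_power)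
qed

lemma prime_cancel:
  fixes g :: "'b::idom"
  assumes "prime_elem g" "\<not> g dvd X" "\<not> g dvd Y" "g ^ a * X = g ^ b * Y"
  shows "a = b"
proof -
  have gnz: "g \<noteq> 0" using assms(1) by auto
  have *: False if "a < b" "g ^ a * X = g ^ b * Y" "\<not> g dvd X" for a b X Y
  proof -
    have "g ^ a * X = g ^ a * (g ^ (b - a) * Y)" using that by (simp add: power_add[symmetric])
    then have "X = g ^ (b - a) * Y" using gnz by simp
    moreover have "g ^ (b - a) = g * g ^ (b - a - 1)" using that(1)
      by (metis Suc_diff_Suc diff_Suc_1 power_Suc zero_less_diff)
    ultimately have "X = g * (g ^ (b - a - 1) * Y)" by (simp add: mult.assoc)
    then have "g dvd X" by (rule dvdI)
    then show False using that by blast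
  qed
  show ?thesis
  proof (rule ccontr)
    assume "a \<noteq> b"
    then consider "a < b" | "b < a" by arith
    then show False
    proof cases
      case 1 then show False using *[of a b X Y] assms by blast
    next
      case 2 then show False using *[of b a Y X] assms by simp
    qed
  qed
qed

lemma exists_witness:
  fixes p :: "'a::idom"
  assumes "fixdiv_val p f = enat n"
  shows "\<exists>w. val p (poly f w) = enat n" "\<And>a. enat n \<le> val p (poly f a)"
proof -
  show le: "\<And>a. enat n \<le> val p (poly f a)" using assms unfolding fixdiv_val_def by (metis INF_lower UNIV_I)
  show "\<exists>w. val p (poly f w) = enat n"
  proof (rule ccontr)
    assume "\<not> ?thesis"
    then have "\<And>a. enat (Suc n) \<le> val p (poly f a)" using le by (metis Suc_ile_eq order_le_neq_trans)
    then have "enat (Suc n) \<le> fixdiv_val p f" unfolding fixdiv_val_def by (rule INF_greatest)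
    then show False using assms by simp
  qed
qed



lemma arith_main:
  fixes E m vp vm :: "'c \<Rightarrow> nat"
  assumes "finite P" "\<forall>g\<in>P. vp g \<le> s * m g" "(n + 1) * s \<le> K"
    "n \<le> (\<Sum>g\<in>P. m g * E g)" "(\<Sum>g\<in>P. m g * E g) = n \<longrightarrow> (\<Sum>g\<in>P. vp g * E g) = (\<Sum>g\<in>P. vm g * E g)"
  shows "K * n \<le> (\<Sum>g\<in>P. (K * m g - vp g + vm g) * E g)"
proof -
  define FF where "FF = (\<Sum>g\<in>P. m g * E g)"
  define SP where "SP = (\<Sum>g\<in>P. vp g * E g)"
  define SM where "SM = (\<Sum>g\<in>P. vm g * E g)"
  have "s \<le> (n + 1) * s" by simp
  then have sK: "s \<le> K" using assms(3) by linarith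
  have le: "vp g \<le> K * m g" if "g \<in> P" for g
  proof -
    have "s * m g \<le> K * m g" using sK by (rule mult_le_mono1)
    moreover have "vp g \<le> s * m g" using assms(2) that by blast
    ultimately show ?thesis by linarith
  qed
  have "int (\<Sum>g\<in>P. (K * m g - vp g + vm g) * E g) = (\<Sum>g\<in>P. int K * (int (m g) * int (E g)) - int (vp g) * int (E g) + int (vm g) * int (E g))"
    unfolding of_nat_sum
  proof (intro sum.cong refl)
    fix g assume "g \<in> P"
    have d: "int (K * m g - vp g) = int K * int (m g) - int (vp g)"
      using le[OF \<open>g \<in> P\<close>] by (simp add: of_nat_diff)
    have "int ((K * m g - vp g + vm g) * E g) = (int (K * m g - vp g) + int (vm g)) * int (E g)"
      by (simp only: of_nat_mult of_nat_add)
    also have "\<dots> = (int K * int (m g) - int (vp g) + int (vm g)) * int (E g)" by (simp only: d)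
    finally show "int ((K * m g - vp g + vm g) * E g) = int K * (int (m g) * int (E g)) - int (vp g) * int (E g) + int (vm g) * int (E g)"
      by (simp add: algebra_simps)
  qed
  also have "\<dots> = int K * int FF - int SP + int SM"
    unfolding FF_def SP_def SM_def of_nat_sum by (simp add: sum.distrib sum_subtractf sum_distrib_left)
  finally have eq: "int (\<Sum>g\<in>P. (K * m g - vp g + vm g) * E g) = int K * int FF - int SP + int SM" .
  have vpb: "SP \<le> s * FF" unfolding FF_def SP_def sum_distrib_left
    by (intro sum_mono) (use assms(2) in \<open>auto simp: mult.assoc intro: mult_le_mono1\<close>)
  show ?thesis
  proof (cases "FF = n")
    case True
    then have "SP = SM" using assms(5) unfolding FF_def SP_def SM_def by simp
    then have "int (\<Sum>g\<in>P. (K * m g - vp g + vm g) * E g) = int (K * n)"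
      by (simp only: eq True) simp
    then show ?thesis by (simp only: of_nat_eq_iff)
  next
    case False
    then have F1: "n + 1 \<le> FF" using assms(4) unfolding FF_def by auto
    have "int ((n + 1) * s) \<le> int K" using assms(3) by (simp only: of_nat_le_iff)
    then have h: "(int n + 1) * int s \<le> int K" by (simp add: algebra_simps)
    have i1: "int K * int n \<le> (int K - int s) * (int n + 1)" using h
      by (simp add: algebra_simps)
    have i2: "(int K - int s) * (int n + 1) \<le> (int K - int s) * int FF" using F1 sK by (intro mult_left_mono) auto
    have "int SP \<le> int (s * FF)" using vpb by (simp only: of_nat_le_iff)
    then have i3: "(int K - int s) * int FF \<le> int K * int FF - int SP"
      by (simp add: algebra_simps)
    have "int K * int n \<le> int K * int FF - int SP + int SM" using i1 i2 i3 by linarith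
    then have "int (K * n) \<le> int (\<Sum>g\<in>P. (K * m g - vp g + vm g) * E g)" using eq by simp
    then show ?thesis by (simp only: of_nat_le_iff)
  qed
qed

lemma arith_zero:
  assumes "(n + 1) * s \<le> K" "n \<ge> 1" "vp \<le> s * m" "m > 0" "K > 0"
  shows "K * m - vp + vm \<ge> (1::nat)"
proof (cases "s = 0")
  case True
  have "K * m > 0" using assms by simp
  moreover have "vp = 0" using assms(3) True by simp
  ultimately show ?thesis by linarith
next
  case False
  have "2 * s \<le> (n + 1) * s" by (rule mult_le_mono1) (use assms(2) in simp)
  then have "s < K" using assms(1) False by linarith
  then have "s * m < K * m" using assms(4) by (rule mult_less_mono1)
  then show ?thesis using assms(3) by linarith
qed

lemma pexp_f:
  fixes p :: "'a::idom"
  assumes dvr: "dvr_uniformizer p" and fprod: "f = (\<Prod>g\<in>P. g ^ m g)" and dv: "\<forall>g\<in>P. g dvd f"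
    and fx: "poly f x \<noteq> 0"
  shows "\<forall>g\<in>P. poly g x \<noteq> 0" "pexp p (poly f x) = (\<Sum>g\<in>P. m g * pexp p (poly g x))"
proof -
  show nz: "\<forall>g\<in>P. poly g x \<noteq> 0"
  proof
    fix g assume "g \<in> P"
    then obtain q where "f = g * q" using dv by blast
    then show "poly g x \<noteq> 0" using fx by auto
  qed
  have e1: "poly f x = (\<Prod>g\<in>P. poly g x ^ m g)" by (simp only: fprod poly_prod poly_power)
  have e2: "pexp p (\<Prod>g\<in>P. poly g x ^ m g) = (\<Sum>g\<in>P. pexp p (poly g x ^ m g))"
    by (rule pexp_prod[OF dvr]) (use nz in simp)
  have "pexp p (poly f x) = (\<Sum>g\<in>P. pexp p (poly g x ^ m g))"
    by (simp only: e1 e2)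
  also have "\<dots> = (\<Sum>g\<in>P. m g * pexp p (poly g x))"
    by (intro sum.cong refl) (simp add: pexp_power[OF dvr] nz)
  finally show "pexp p (poly f x) = (\<Sum>g\<in>P. m g * pexp p (poly g x))" .
qed



lemma int_part:
  fixes p :: "'a::idom"
  assumes dvr: "dvr_uniformizer p" and finP: "finite P" and fprod: "f = (\<Prod>g\<in>P. g ^ m g)"
    and dv: "\<forall>g\<in>P. g dvd f" and ge: "\<And>a. enat n \<le> val p (poly f a)"
    and wit: "\<forall>x. poly f x \<noteq> 0 \<longrightarrow> pexp p (poly f x) = n \<longrightarrow>
        (\<Sum>g\<in>P. vp g * pexp p (poly g x)) = (\<Sum>g\<in>P. vm g * pexp p (poly g x))"
    and sb: "\<forall>g\<in>P. vp g \<le> s * m g" and K: "(n + 1) * s \<le> K" and n1: "n \<ge> 1"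
  shows "p ^ (K * n) dvd poly (\<Prod>g\<in>P. g ^ (K * m g - vp g + vm g)) x"
proof (cases "poly f x = 0")
  case True
  have "poly f x = (\<Prod>g\<in>P. poly g x ^ m g)" using fprod by (simp add: poly_prod)
  then obtain g where g: "g \<in> P" "poly g x ^ m g = 0" using True finP by auto
  then have g0: "poly g x = 0" "m g > 0" by (auto simp: power_0_left)
  show ?thesis
  proof (cases "K = 0")
    case True then show ?thesis by simp
  next
    case False
    have "K * m g - vp g + vm g \<ge> 1" using arith_zero[OF K n1 _ g0(2)] sb g False by auto
    then have e1: "K * m g - vp g + vm g > 0" by (metis less_le_trans zero_less_one)
    have "poly g x ^ (K * m g - vp g + vm g) = 0" unfolding g0(1) using e1 by (rule zero_power)
    then have "poly (\<Prod>g\<in>P. g ^ (K * m g - vp g + vm g)) x = 0"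
      using g finP by (auto simp: poly_prod)
    then show ?thesis by simp
  qed
next
  case False
  note pf = pexp_f[OF dvr fprod dv False]
  have nzp: "poly (\<Prod>g\<in>P. g ^ (K * m g - vp g + vm g)) x \<noteq> 0" using pf(1) finP by (simp add: poly_prod)
  have eqx: "pexp p (poly (\<Prod>g\<in>P. g ^ (K * m g - vp g + vm g)) x) = (\<Sum>g\<in>P. (K * m g - vp g + vm g) * pexp p (poly g x))"
    using pexp_prod[OF dvr, of P "\<lambda>g. poly g x ^ (K * m g - vp g + vm g)"] pexp_power[OF dvr] pf(1)
    by (simp add: poly_prod)
  have h1: "n \<le> (\<Sum>g\<in>P. m g * pexp p (poly g x))"
    using ge[of x] False pf(2) unfolding val_def by simp
  have h2: "(\<Sum>g\<in>P. m g * pexp p (poly g x)) = n \<longrightarrow> (\<Sum>g\<in>P. vp g * pexp p (poly g x)) = (\<Sum>g\<in>P. vm g * pexp p (poly g x))"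
    using wit False pf(2) by simp
  have "K * n \<le> (\<Sum>g\<in>P. (K * m g - vp g + vm g) * pexp p (poly g x))"
    by (rule arith_main[OF finP sb K h1 h2])
  then have "K * n \<le> pexp p (poly (\<Prod>g\<in>P. g ^ (K * m g - vp g + vm g)) x)"
    by (simp only: eqx)
  then show ?thesis using pexp_dvd_iff[OF dvr nzp, of "K * n"] by blast
qed



lemma to_fract_power: "to_fract (x ^ k) = to_fract x ^ k"
  by (induction k) simp_all

lemma core:
  fixes p :: "'a::idom" and f :: "'a poly" and P :: "'a poly set"
    and m :: "'a poly \<Rightarrow> nat" and n :: nat and v :: "'a poly \<Rightarrow> int" and s t j :: nat
  assumes dvr: "dvr_uniformizer p" and prim: "primitive f" and degf: "degree f > 0"
    and ids: "irred_divisor_set f P" and fprod: "f = (\<Prod>g\<in>P. g ^ m g)"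
    and fd: "fixdiv_val p f = enat n" and n1: "n \<ge> 1"
    and vnz: "\<exists>g\<in>P. v g \<noteq> 0"
    and vw: "\<forall>a\<in>witnesses p f. (\<Sum>g\<in>P. of_int (v g) * of_nat (pexp p (poly g a))) = (0::rat)"
    and sb: "\<forall>g\<in>P. nat (max (v g) 0) \<le> s * m g" and tb: "\<forall>g\<in>P. nat (- min (v g) 0) \<le> t * m g"
    and jb: "(n + 1) * (s + t) \<le> j"
  defines "F \<equiv> smult (inverse (to_fract (p ^ n))) (map_poly to_fract f)"
  shows "\<exists>xs. factorization_in intR (F ^ j) xs \<and> \<not> ess_same_in intR xs (replicate j F)"
proof -
  have finP: "finite P" using finite_P[OF degf fprod] .
  have dv: "\<forall>g\<in>P. g dvd f" using ids unfolding irred_divisor_set_def by auto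
  have Pirr: "\<forall>g\<in>P. irreducible g" using ids unfolding irred_divisor_set_def by auto
  have Pprime: "\<forall>g\<in>P. prime_elem g" using irred_prime[OF dvr] Pirr P_deg[OF prim ids] by blast
  have pnz: "p \<noteq> 0" using dvr_basic[OF dvr] by auto
  obtain w where w: "val p (poly f w) = enat n" using exists_witness[OF fd] by blast
  have ge: "\<And>a. enat n \<le> val p (poly f a)" using exists_witness[OF fd] by blast
  have fw: "poly f w \<noteq> 0" using w unfolding val_def by (auto split: if_splits)
  have pfw: "pexp p (poly f w) = n" using w fw unfolding val_def by simp
  have wW: "w \<in> witnesses p f" using w fd unfolding witnesses_def by simp
  define vp where "vp g = nat (max (v g) 0)" for g
  define vm where "vm g = nat (- min (v g) 0)" for g
  have vpm: "v g = int (vp g) - int (vm g)" for g unfolding vp_def vm_def by auto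
  have wit: "(\<Sum>g\<in>P. vp g * pexp p (poly g x)) = (\<Sum>g\<in>P. vm g * pexp p (poly g x))"
    if "poly f x \<noteq> 0" "pexp p (poly f x) = n" for x
  proof -
    have "x \<in> witnesses p f" using that fd unfolding witnesses_def val_def by simp
    then have "(\<Sum>g\<in>P. of_int (v g) * of_nat (pexp p (poly g x))) = (0::rat)" using vw by blast
    moreover have "(\<Sum>g\<in>P. of_int (v g) * of_nat (pexp p (poly g x))) =
       (\<Sum>g\<in>P. of_nat (vp g * pexp p (poly g x)) - (of_nat (vm g * pexp p (poly g x)) :: rat))"
      by (intro sum.cong refl) (simp add: vpm algebra_simps)
    ultimately have "of_nat (\<Sum>g\<in>P. vp g * pexp p (poly g x)) = (of_nat (\<Sum>g\<in>P. vm g * pexp p (poly g x)) :: rat)"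
      by (simp add: sum_subtractf of_nat_sum)
    then show ?thesis by (simp only: of_nat_eq_iff)
  qed
  define k0 where "k0 = (n + 1) * s"
  define J where "J = j - k0"
  have k0j: "k0 \<le> j" using jb unfolding k0_def by (simp add: algebra_simps)
  have JJ: "(n + 1) * t \<le> J" using jb unfolding k0_def J_def by (simp add: algebra_simps)
  have jk: "j = k0 + J" using k0j unfolding J_def by simp
  define eA where "eA g = k0 * m g - vp g + vm g" for g
  define eB where "eB g = J * m g - vm g + vp g" for g
  define a where "a = (\<Prod>g\<in>P. g ^ eA g)"
  define b where "b = (\<Prod>g\<in>P. g ^ eB g)"
  have sb': "\<forall>g\<in>P. vp g \<le> s * m g" using sb unfolding vp_def by blast
  have tb': "\<forall>g\<in>P. vm g \<le> t * m g" using tb unfolding vm_def by blast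
  have witA: "\<forall>x. poly f x \<noteq> 0 \<longrightarrow> pexp p (poly f x) = n \<longrightarrow>
        (\<Sum>g\<in>P. vp g * pexp p (poly g x)) = (\<Sum>g\<in>P. vm g * pexp p (poly g x))" using wit by blast
  have witB: "\<forall>x. poly f x \<noteq> 0 \<longrightarrow> pexp p (poly f x) = n \<longrightarrow>
        (\<Sum>g\<in>P. vm g * pexp p (poly g x)) = (\<Sum>g\<in>P. vp g * pexp p (poly g x))" using wit by metis
  have intA: "\<forall>x. p ^ (k0 * n) dvd poly a x"
  proof
    fix x show "p ^ (k0 * n) dvd poly a x"
      unfolding a_def eA_def by (rule int_part[OF dvr finP fprod dv ge witA sb']) (use n1 in \<open>simp_all add: k0_def\<close>)
  qed
  have intB: "\<forall>x. p ^ (J * n) dvd poly b x"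
  proof
    fix x show "p ^ (J * n) dvd poly b x"
      unfolding b_def eB_def by (rule int_part[OF dvr finP fprod dv ge witB tb' JJ n1])
  qed
  have le1: "vp g \<le> k0 * m g" if "g \<in> P" for g
  proof -
    have "s \<le> k0" unfolding k0_def by simp
    then have "s * m g \<le> k0 * m g" by (rule mult_le_mono1)
    moreover have "vp g \<le> s * m g" using sb' that by blast
    ultimately show ?thesis by linarith
  qed
  have le2: "vm g \<le> J * m g" if "g \<in> P" for g
  proof -
    have "t \<le> (n + 1) * t" by simp
    then have "t \<le> J" using JJ by linarith
    then have "t * m g \<le> J * m g" by (rule mult_le_mono1)
    moreover have "vm g \<le> t * m g" using tb' that by blast
    ultimately show ?thesis by linarith
  qed
  have eAB: "eA g + eB g = j * m g" if "g \<in> P" for g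
  proof -
    have "j * m g = k0 * m g + J * m g" by (simp add: jk add_mult_distrib)
    then show ?thesis unfolding eA_def eB_def using le1[OF that] le2[OF that] by linarith
  qed
  have ab: "a * b = f ^ j"
  proof -
    have "a * b = (\<Prod>g\<in>P. g ^ eA g * g ^ eB g)" unfolding a_def b_def by (simp add: prod.distrib)
    also have "\<dots> = (\<Prod>g\<in>P. (g ^ m g) ^ j)"
      by (intro prod.cong refl) (simp add: power_add[symmetric] eAB power_mult[symmetric] mult.commute)
    also have "\<dots> = f ^ j" unfolding fprod by (simp add: prod_power_distrib)
    finally show ?thesis .
  qed
  define A where "A = smult (inverse (to_fract (p ^ (k0 * n)))) (map_poly to_fract a)"
  define B where "B = smult (inverse (to_fract (p ^ (J * n)))) (map_poly to_fract b)"
  have AI: "A \<in> intR" unfolding A_def by (rule intR_scaled[OF pnz intA])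
  have BI: "B \<in> intR" unfolding B_def by (rule intR_scaled[OF pnz intB])
  define tp where "tp = to_fract p"
  have tpnz: "tp \<noteq> 0" using pnz unfolding tp_def by simp
  have FkE: "F ^ k = smult (inverse (tp ^ (n * k))) (map_poly to_fract (f ^ k))" for k
    unfolding F_def tp_def by (simp add: smult_power fract_power to_fract_power power_mult power_inverse)
  have ABF: "A * B = F ^ j"
  proof -
    have "A * B = smult (inverse (tp ^ (k0 * n)) * inverse (tp ^ (J * n))) (map_poly to_fract (a * b))"
      unfolding A_def B_def tp_def by (simp add: to_fract_power mult.commute)
    also have "inverse (tp ^ (k0 * n)) * inverse (tp ^ (J * n)) = inverse (tp ^ (n * j))"
    proof -
      have "n * j = k0 * n + J * n" by (simp add: jk algebra_simps)
      then have "tp ^ (n * j) = tp ^ (k0 * n) * tp ^ (J * n)" by (simp add: power_add)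
      then show ?thesis by (simp add: inverse_mult_distrib)
    qed
    finally show ?thesis unfolding FkE ab .
  qed
  have Fjw: "poly (F ^ j) (to_fract w) \<noteq> 0"
    using pnz fw unfolding F_def by (simp add: poly_fract)
  have Aw: "poly A (to_fract w) \<noteq> 0" and Bw: "poly B (to_fract w) \<noteq> 0"
    using Fjw unfolding ABF[symmetric] by auto
  have C: "\<not> (\<exists>U k. unit_in intR U \<and> A = U * F ^ k)"
  proof
    assume "\<exists>U k. unit_in intR U \<and> A = U * F ^ k"
    then obtain U k where U: "unit_in intR U" "A = U * F ^ k" by blast
    obtain u where u: "u dvd 1" "U = [:to_fract u:]" using unit_in_intR[OF U(1)] by blast
    have unz: "u \<noteq> 0" using u(1) by auto
    have e: "smult (inverse (tp ^ (k0 * n))) (map_poly to_fract a) =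
             smult (to_fract u * inverse (tp ^ (n * k))) (map_poly to_fract (f ^ k))"
      using U(2) unfolding u(2) FkE A_def tp_def by (simp add: to_fract_power mult.commute)
    have "map_poly to_fract (smult (p ^ (n * k)) a) =
          smult (tp ^ (k0 * n) * tp ^ (n * k)) (smult (inverse (tp ^ (k0 * n))) (map_poly to_fract a))"
      using tpnz unfolding tp_def by (simp add: to_fract_power field_simps)
    also have "\<dots> = smult (tp ^ (k0 * n) * tp ^ (n * k)) (smult (to_fract u * inverse (tp ^ (n * k))) (map_poly to_fract (f ^ k)))"
      by (simp only: e)
    also have "\<dots> = map_poly to_fract (smult (u * p ^ (k0 * n)) (f ^ k))"
      using tpnz unfolding tp_def by (simp add: to_fract_power field_simps)
    finally have key: "smult (p ^ (n * k)) a = smult (u * p ^ (k0 * n)) (f ^ k)"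
      using fract_poly_eq_iff by blast
    have expo: "eA g = m g * k" if g: "g \<in> P" for g
    proof -
      have pg: "prime_elem g" using Pprime g by blast
      have nd: "\<forall>h\<in>P-{g}. \<not> g dvd h" using P_nodvd[OF ids g] by blast
      define Ra where "Ra = (\<Prod>h\<in>P-{g}. h ^ eA h)"
      define Rf where "Rf = (\<Prod>h\<in>P-{g}. h ^ (m h * k))"
      have aR: "a = g ^ eA g * Ra" unfolding a_def Ra_def using finP g by (simp add: prod.remove)
      have "f ^ k = (\<Prod>h\<in>P. h ^ (m h * k))" unfolding fprod by (simp add: prod_power_distrib power_mult)
      then have fR: "f ^ k = g ^ (m g * k) * Rf" unfolding Rf_def using finP g by (simp add: prod.remove)
      have nRa: "\<not> g dvd Ra" unfolding Ra_def using prime_nodvd_prod[OF pg _ nd] finP by simp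
      have nRf: "\<not> g dvd Rf" unfolding Rf_def using prime_nodvd_prod[OF pg _ nd] finP by simp
      have ndc: "\<not> g dvd [:c:]" if "c \<noteq> 0" for c
      proof
        assume "g dvd [:c:]"
        then have "degree g \<le> degree [:c:]" using that by (intro dvd_imp_degree_le) auto
        then show False using P_deg[OF prim ids g] by simp
      qed
      have c1: "\<not> g dvd [:p ^ (n * k):]" using ndc pnz by simp
      have c2: "\<not> g dvd [:u * p ^ (k0 * n):]" using ndc pnz unz by simp
      have n1': "\<not> g dvd [:p ^ (n * k):] * Ra" unfolding prime_elem_dvd_mult_iff[OF pg] using c1 nRa by blast
      have n2': "\<not> g dvd [:u * p ^ (k0 * n):] * Rf" unfolding prime_elem_dvd_mult_iff[OF pg] using c2 nRf by blast
      have "g ^ eA g * ([:p ^ (n * k):] * Ra) = g ^ (m g * k) * ([:u * p ^ (k0 * n):] * Rf)"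
        using key unfolding aR fR by (simp add: ac_simps)
      then show ?thesis using prime_cancel[OF pg n1' n2'] by simp
    qed
    have vmul: "v g = (int k0 - int k) * int (m g)" if "g \<in> P" for g
    proof -
      have "int (eA g) = int k0 * int (m g) - int (vp g) + int (vm g)"
        unfolding eA_def using le1[OF that] by (simp add: of_nat_diff)
      then show ?thesis using expo[OF that] vpm[of g] by (simp add: algebra_simps)
    qed
    have "(\<Sum>g\<in>P. of_int (v g) * of_nat (pexp p (poly g w))) = (0::rat)" using vw wW by blast
    moreover have "(\<Sum>g\<in>P. of_int (v g) * of_nat (pexp p (poly g w))) =
        (of_int (int k0 - int k) * of_nat (\<Sum>g\<in>P. m g * pexp p (poly g w)) :: rat)"
      unfolding of_nat_sum sum_distrib_left by (intro sum.cong refl) (simp add: vmul)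
    moreover have "(\<Sum>g\<in>P. m g * pexp p (poly g w)) = n"
      using pexp_f(2)[OF dvr fprod dv fw] pfw by simp
    ultimately have "(of_int (int k0 - int k) :: rat) * of_nat n = 0" by simp
    then have "int k0 - int k = 0" using n1 by simp
    then have "\<forall>g\<in>P. v g = 0" using vmul by simp
    then show False using vnz by blast
  qed
  have nuA: "\<not> unit_in intR A"
  proof
    assume "unit_in intR A"
    moreover have "A = A * F ^ 0" by simp
    ultimately show False using C by blast
  qed
  have nuB: "\<not> unit_in intR B"
  proof
    assume "unit_in intR B"
    then obtain B' where B': "B' \<in> intR" "B * B' = 1" unfolding unit_in_def by blast
    have "unit_in intR B'" using B' BI unfolding unit_in_def by (auto simp: mult.commute)
    moreover have "A = B' * F ^ j"
    proof -
      have "A = A * (B * B')" using B'(2) by simp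
      also have "\<dots> = B' * (A * B)" by (simp add: ac_simps)
      finally show ?thesis unfolding ABF .
    qed
    ultimately show False using C by blast
  qed
  obtain xa where xa: "factorization_in intR A xa" using atomic[OF dvr AI Aw nuA] by blast
  obtain xb where xb: "factorization_in intR B xb" using atomic[OF dvr BI Bw nuB] by blast
  have fac: "factorization_in intR (F ^ j) (xa @ xb)" using xa xb ABF unfolding factorization_in_def by auto
  have "\<not> ess_same_in intR (xa @ xb) (replicate j F)"
  proof
    assume "ess_same_in intR (xa @ xb) (replicate j F)"
    then have "\<forall>y\<in>set xa. assoc_in intR y F" using ess_same_assoc by fastforce
    then obtain U where "unit_in intR U" "prod_list xa = U * F ^ length xa" using assoc_prod by blast
    then show False using C xa unfolding factorization_in_def by auto
  qed
  then show ?thesis using fac by blast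
qed



lemma m_pos:
  fixes p :: "'a::idom" and f :: "'a poly"
  assumes dvr: "dvr_uniformizer p" and prim: "primitive f" and degf: "degree f > 0"
    and ids: "irred_divisor_set f P" and fprod: "f = (\<Prod>g\<in>P. g ^ m g)" and g: "g \<in> P"
  shows "m g > 0"
proof (rule ccontr)
  assume "\<not> m g > 0"
  then have m0: "m g = 0" by simp
  have finP: "finite P" using finite_P[OF degf fprod] .
  have girr: "irreducible g" using ids g unfolding irred_divisor_set_def by auto
  have pg: "prime_elem g" by (rule irred_prime[OF dvr girr P_deg[OF prim ids g]])
  have nd: "\<forall>h\<in>P-{g}. \<not> g dvd h" using P_nodvd[OF ids g] by blast
  have e: "f = g ^ m g * (\<Prod>h\<in>P-{g}. h ^ m h)" unfolding fprod using finP g by (rule prod.remove)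
  have fe: "f = (\<Prod>h\<in>P-{g}. h ^ m h)" by (simp only: e m0 power_0 mult_1_left)
  have gd: "g dvd f" using ids g unfolding irred_divisor_set_def by auto
  have fin': "finite (P - {g})" using finP by blast
  have "\<not> g dvd (\<Prod>h\<in>P-{g}. h ^ m h)" by (rule prime_nodvd_prod[OF pg fin' nd])
  then show False using gd unfolding fe by blast
qed

lemma ratio_bound:
  fixes x :: int and m s :: nat
  assumes "(of_int x / of_nat m :: rat) \<le> of_nat s" "m > 0"
  shows "x \<le> int s * int m"
proof -
  have mp: "(0::rat) < of_nat m" using assms(2) by simp
  have "(of_int x :: rat) \<le> of_nat s * of_nat m" using assms(1) unfolding pos_divide_le_eq[OF mp] .
  then have "(of_int x :: rat) \<le> of_int (int s * int m)" by simp
  then show ?thesis by (simp only: of_int_le_iff)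
qed

theorem theorem1:
  fixes p :: "'a::idom" and f :: "'a poly" and P :: "'a poly set"
    and m :: "'a poly \<Rightarrow> nat" and n :: nat
  assumes "dvr_uniformizer p"
    and "finite_residue_field p"
    and "primitive f"
    and "degree f > 0"
    and "irred_divisor_set f P"
    and "f = (\<Prod>g\<in>P. g ^ m g)"
    and "fixdiv_val p f = enat n"
    and "n \<ge> 1"
  defines "F \<equiv> smult (inverse (to_fract (p ^ n))) (map_poly to_fract f)"
  shows "(fdk p f P \<noteq> {\<lambda>_. 0} \<longrightarrow> \<not> abs_irred_in intR F)
    \<and> (\<forall>v :: 'a poly \<Rightarrow> int. \<forall>j :: nat.
         irred_in intR F \<and> (\<forall>g. g \<notin> P \<longrightarrow> v g = 0) \<and> (\<exists>g\<in>P. v g \<noteq> 0) \<and>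
         (\<lambda>g. of_int (v g)) \<in> fdk p f P \<and>
         int j \<ge> int (n + 1) * (\<lceil>norm_pos_ratio P v m\<rceil> + \<lceil>norm_neg_ratio P v m\<rceil>)
         \<longrightarrow> factors_nonuniquely_in intR (F ^ j))"
proof -
  note dvr = assms(1) and prim = assms(3) and degf = assms(4) and ids = assms(5)
    and fprod = assms(6) and fd = assms(7) and n1 = assms(8)
  have finP: "finite P" using finite_P[OF degf fprod] .
  have mpos: "\<And>g. g \<in> P \<Longrightarrow> m g > 0" using m_pos[OF dvr prim degf ids fprod] by blast
  have part2: "factors_nonuniquely_in intR (F ^ j)"
    if irr: "irred_in intR F" and vnz: "\<exists>g\<in>P. v g \<noteq> 0" and vf: "(\<lambda>g. of_int (v g)) \<in> fdk p f P"
      and jb: "int j \<ge> int (n + 1) * (\<lceil>norm_pos_ratio P v m\<rceil> + \<lceil>norm_neg_ratio P v m\<rceil>)"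
    for v :: "'a poly \<Rightarrow> int" and j :: nat
  proof -
    define s where "s = nat \<lceil>norm_pos_ratio P v m\<rceil>"
    define t where "t = nat \<lceil>norm_neg_ratio P v m\<rceil>"
    have np: "norm_pos_ratio P v m \<ge> 0" unfolding norm_pos_ratio_def using finP by (simp add: Max_ge_iff)
    have nn: "norm_neg_ratio P v m \<ge> 0" unfolding norm_neg_ratio_def using finP by (simp add: Max_ge_iff)
    have si: "int s = \<lceil>norm_pos_ratio P v m\<rceil>" unfolding s_def using np by simp
    have ti: "int t = \<lceil>norm_neg_ratio P v m\<rceil>" unfolding t_def using nn by simp
    have "int ((n + 1) * (s + t)) = int (n + 1) * (int s + int t)" by (simp only: of_nat_mult of_nat_add[of s t])
    also have "\<dots> = int (n + 1) * (\<lceil>norm_pos_ratio P v m\<rceil> + \<lceil>norm_neg_ratio P v m\<rceil>)" by (simp only: si ti)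
    finally have "int ((n + 1) * (s + t)) \<le> int j" using jb by simp
    then have jb': "(n + 1) * (s + t) \<le> j" by (simp only: of_nat_le_iff)
    have sb: "\<forall>g\<in>P. nat (max (v g) 0) \<le> s * m g"
    proof
      fix g assume g: "g \<in> P"
      have "of_int (max (v g) 0) / of_nat (m g) \<le> norm_pos_ratio P v m"
        unfolding norm_pos_ratio_def using finP g by (intro Max_ge) auto
      also have "\<dots> \<le> of_int \<lceil>norm_pos_ratio P v m\<rceil>" by (rule le_of_int_ceiling)
      finally have "of_int (max (v g) 0) / of_nat (m g) \<le> (of_nat s :: rat)" using si by simp
      then have "max (v g) 0 \<le> int s * int (m g)" using mpos[OF g] by (rule ratio_bound)
      then show "nat (max (v g) 0) \<le> s * m g" by (simp add: nat_le_iff)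
    qed
    have tb: "\<forall>g\<in>P. nat (- min (v g) 0) \<le> t * m g"
    proof
      fix g assume g: "g \<in> P"
      have "of_int (- min (v g) 0) / of_nat (m g) \<le> norm_neg_ratio P v m"
        unfolding norm_neg_ratio_def using finP g by (intro Max_ge) auto
      also have "\<dots> \<le> of_int \<lceil>norm_neg_ratio P v m\<rceil>" by (rule le_of_int_ceiling)
      finally have "of_int (- min (v g) 0) / of_nat (m g) \<le> (of_nat t :: rat)" using ti by simp
      then have "- min (v g) 0 \<le> int t * int (m g)" using mpos[OF g] by (rule ratio_bound)
      then show "nat (- min (v g) 0) \<le> t * m g" by (simp add: nat_le_iff)
    qed
    have vw: "\<forall>a\<in>witnesses p f. (\<Sum>g\<in>P. of_int (v g) * of_nat (pexp p (poly g a))) = (0::rat)"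
      using vf unfolding fdk_def by auto
    obtain xs where xs: "factorization_in intR (F ^ j) xs" "\<not> ess_same_in intR xs (replicate j F)"
      using core[OF dvr prim degf ids fprod fd n1 vnz vw sb tb jb'] unfolding F_def by blast
    have "factorization_in intR (F ^ j) (replicate j F)"
      using irr unfolding factorization_in_def by simp
    then show ?thesis unfolding factors_nonuniquely_in_def using xs by blast
  qed
  have part1: "\<not> abs_irred_in intR F" if fk: "fdk p f P \<noteq> {\<lambda>_. 0}"
  proof
    assume ai: "abs_irred_in intR F"
    have "(\<lambda>_. 0) \<in> fdk p f P" unfolding fdk_def by simp
    then obtain u where u: "u \<in> fdk p f P" "u \<noteq> (\<lambda>_. 0)" using fk by blast
    have usupp: "\<forall>g. g \<notin> P \<longrightarrow> u g = 0" and uw: "\<forall>a \<in> witnesses p f. (\<Sum>g\<in>P. u g * of_nat (pexp p (poly g a))) = 0"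
      using u(1) unfolding fdk_def by auto
    obtain g0 where g0: "u g0 \<noteq> 0" using u(2) by auto
    then have g0P: "g0 \<in> P" using usupp by blast
    define d where "d g = snd (quotient_of (u g))" for g
    define nu where "nu g = fst (quotient_of (u g))" for g
    define D where "D = (\<Prod>g\<in>P. d g)"
    have dpos: "d g > 0" for g unfolding d_def using quotient_of_denom_pos' by blast
    have ud: "u g = of_int (nu g) / of_int (d g)" for g
      unfolding nu_def d_def by (rule quotient_of_div) simp
    have Dnz: "D \<noteq> 0" unfolding D_def using dpos finP by (simp add: less_imp_neq[symmetric])
    define v where "v g = (if g \<in> P then nu g * (D div d g) else 0)" for g
    have vu: "of_int (v g) = of_int D * u g" if "g \<in> P" for g
    proof -
      have "d g dvd D" unfolding D_def using that finP by (intro dvd_prodI) auto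
      then have DD: "D = d g * (D div d g)" by simp
      have "of_int D * u g = of_int (d g * (D div d g)) * (of_int (nu g) / of_int (d g))" using DD ud[of g] by simp
      also have "\<dots> = of_int (nu g * (D div d g))" using dpos[of g] by (simp add: field_simps)
      finally show ?thesis unfolding v_def using that by simp
    qed
    have "(of_int (v g0) :: rat) \<noteq> 0" using vu[OF g0P] g0 Dnz by simp
    then have "v g0 \<noteq> 0" by simp
    then have vnz: "\<exists>g\<in>P. v g \<noteq> 0" using g0P by blast
    have vw: "\<forall>a\<in>witnesses p f. (\<Sum>g\<in>P. of_int (v g) * of_nat (pexp p (poly g a))) = (0::rat)"
    proof
      fix a assume a: "a \<in> witnesses p f"
      have "(\<Sum>g\<in>P. of_int (v g) * of_nat (pexp p (poly g a))) = (\<Sum>g\<in>P. of_int D * (u g * of_nat (pexp p (poly g a))) :: rat)"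
        by (intro sum.cong refl) (simp add: vu mult.assoc)
      also have "\<dots> = of_int D * (\<Sum>g\<in>P. u g * of_nat (pexp p (poly g a)))" by (simp add: sum_distrib_left)
      also have "\<dots> = 0" using uw a by simp
      finally show "(\<Sum>g\<in>P. of_int (v g) * of_nat (pexp p (poly g a))) = (0::rat)" .
    qed
    define s where "s = (\<Sum>g\<in>P. nat \<bar>v g\<bar>)"
    have bnd: "nat \<bar>v g\<bar> \<le> s * m g" if "g \<in> P" for g
    proof -
      have "nat \<bar>v g\<bar> \<le> s" unfolding s_def using finP that by (intro member_le_sum) auto
      also have "\<dots> \<le> s * m g" using mpos[OF that] by simp
      finally show ?thesis .
    qed
    have sb: "\<forall>g\<in>P. nat (max (v g) 0) \<le> s * m g"
    proof
      fix g assume g: "g \<in> P"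
      have "nat (max (v g) 0) \<le> nat \<bar>v g\<bar>" by simp
      then show "nat (max (v g) 0) \<le> s * m g" using bnd[OF g] by linarith
    qed
    have tb: "\<forall>g\<in>P. nat (- min (v g) 0) \<le> s * m g"
    proof
      fix g assume g: "g \<in> P"
      have "nat (- min (v g) 0) \<le> nat \<bar>v g\<bar>" by simp
      then show "nat (- min (v g) 0) \<le> s * m g" using bnd[OF g] by linarith
    qed
    obtain xs where xs: "factorization_in intR (F ^ ((n + 1) * (s + s))) xs"
        "\<not> ess_same_in intR xs (replicate ((n + 1) * (s + s)) F)"
      using core[OF dvr prim degf ids fprod fd n1 vnz vw sb tb order_refl] unfolding F_def by blast
    then show False using ai unfolding abs_irred_in_def by blast
  qed
  show ?thesis
  proof (intro conjI allI impI)
    assume "fdk p f P \<noteq> {\<lambda>_. 0}"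
    then show "\<not> abs_irred_in intR F" by (rule part1)
  next
    fix v :: "'a poly \<Rightarrow> int" and j :: nat
    assume H: "irred_in intR F \<and> (\<forall>g. g \<notin> P \<longrightarrow> v g = 0) \<and> (\<exists>g\<in>P. v g \<noteq> 0) \<and>
         (\<lambda>g. of_int (v g)) \<in> fdk p f P \<and>
         int j \<ge> int (n + 1) * (\<lceil>norm_pos_ratio P v m\<rceil> + \<lceil>norm_neg_ratio P v m\<rceil>)"
    then have h1: "irred_in intR F" and h2: "\<exists>g\<in>P. v g \<noteq> 0" and h3: "(\<lambda>g. of_int (v g)) \<in> fdk p f P"
      and h4: "int j \<ge> int (n + 1) * (\<lceil>norm_pos_ratio P v m\<rceil> + \<lceil>norm_neg_ratio P v m\<rceil>)"
      by blast+
    show "factors_nonuniquely_in intR (F ^ j)" by (rule part2[OF h1 h2 h3 h4])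
  qed
qed


end
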